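(* Let $k\ge 1$, $0\le r<k$ and $n\ge 1$ be integers, and let $$B_n(k,r,x)=\left(\binom{i-k+1+r}{i-j}x^k+\binom{i+1+r}{i-j+1}\right)_{i,j=0}^{n-1}.$$ Then $x^r\det B_n(k,r,x)=F^{(k)}_{kn+r}(x)$.
   Context: Binomial coefficients are the generalized ones: for an integer $m$ (possibly negative) and an integer $j$, $\binom{m}{j}=\frac{m(m-1)\cdots(m-j+1)}{j!}$ if $j\ge 0$ and $\binom{m}{j}=0$ if $j<0$. For an integer $k\ge1$, the generalized Fibonacci polynomials $F^{(k)}_n(x)\in\mathbb{Z}[x]$ ($n\ge0$) are defined by $F^{(k)}_n(x)=x^n$ for $0\le n<k$ and $F^{(k)}_n(x)=xF^{(k)}_{n-1}(x)+F^{(k)}_{n-k}(x)$ for $n\ge k$. *)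

theory Defs
  imports "HOL-Computational_Algebra.Polynomial" "Jordan_Normal_Form.Determinant"
begin

text \<open>Generalized binomial coefficient for integer upper argument m and integer lower
argument j: m(m-1)...(m-j+1)/j! if j >= 0, and 0 if j < 0. The division is exact.\<close>
definition gbinom :: "int \<Rightarrow> int \<Rightarrow> int" where
  "gbinom m j = (if j < 0 then 0
     else (\<Prod>i<nat j. (m - int i)) div int (fact (nat j)))"

text \<open>Generalized Fibonacci polynomials F^(k)_n(x) in Z[x] (only meaningful for k >= 1;
  the k = 0 guard just ensures termination).\<close>
fun genfib :: "nat \<Rightarrow> nat \<Rightarrow> int poly" where
  "genfib k n = (if k = 0 \<or> n < k then monom 1 n
     else pCons 0 (genfib k (n - 1)) + genfib k (n - k))"

definition Bmat :: "nat \<Rightarrow> nat \<Rightarrow> nat \<Rightarrow> int poly mat" where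
  "Bmat n k r = mat n n (\<lambda>(i,j).
      smult (of_int (gbinom (int i - int k + 1 + int r) (int i - int j))) (monom 1 k)
      + [: of_int (gbinom (int i + 1 + int r) (int i - int j + 1)) :])"

end

theory Submission
  imports Defs "HOL-Computational_Algebra.Formal_Power_Series"
begin


lemma gbinom_rat: "j \<ge> 0 \<Longrightarrow> (of_int (gbinom m j)::rat) = (of_int m) gchoose nat j"
  using of_int_gbinomial[of m "nat j", where 'a=rat] gbinomial_prod_rev[of m "nat j"]
  by (simp add: gbinom_def atLeast0LessThan)

lemma gbinom_negj: "j < 0 \<Longrightarrow> gbinom m j = 0" by (simp add: gbinom_def)

lemma gbinom_neg_upper: "gbinom m s = (-1)^nat s * gbinom (s - m - 1) s"
proof (cases "s < 0")
  case True thus ?thesis by (simp add: gbinom_negj)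
next
  case False
  have "(of_int (gbinom m s)::rat) = of_int ((-1)^nat s * gbinom (s - m - 1) s)"
    using False gbinomial_negated_upper[of "of_int m :: rat" "nat s"]
    by (simp add: gbinom_rat)
  thus ?thesis by (simp only: of_int_eq_iff)
qed

lemma gbinom_vdm: "(\<Sum>t\<in>{0..n}. gbinom a (int t) * gbinom b (int n - int t)) = gbinom (a+b) (int n)"
proof -
  have "(of_int (\<Sum>t\<in>{0..n}. gbinom a (int t) * gbinom b (int n - int t)) :: rat)
     = (\<Sum>t\<in>{0..n}. (of_int a gchoose t) * (of_int b gchoose (n - t)))"
    unfolding of_int_sum
  proof (rule sum.cong[OF refl])
    fix t assume "t \<in> {0..n}"
    hence e: "int n - int t = int (n - t)" by auto
    show "(of_int (gbinom a (int t) * gbinom b (int n - int t)) :: rat) = (of_int a gchoose t) * (of_int b gchoose (n - t))"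
      unfolding e of_int_mult by (simp only: gbinom_rat of_nat_0_le_iff nat_int)
  qed
  also have "\<dots> = of_int (a+b) gchoose n" by (simp add: gbinomial_Vandermonde)
  also have "\<dots> = of_int (gbinom (a+b) (int n))" by (simp add: gbinom_rat)
  finally show ?thesis by (simp only: of_int_eq_iff)
qed

lemma gbinom_conv: "(\<Sum>j\<in>{0..N}. gbinom m (int N - int j) * gbinom b (int j - int q))
   = gbinom (m + b) (int N - int q)"
proof (cases "N < q")
  case True thus ?thesis by (auto simp: gbinom_negj intro!: sum.neutral)
next
  case False
  have split: "{0..N} = {0..<q} \<union> {q..N}" using False by auto
  have "(\<Sum>j\<in>{0..N}. gbinom m (int N - int j) * gbinom b (int j - int q))
     = (\<Sum>j\<in>{q..N}. gbinom m (int N - int j) * gbinom b (int j - int q))"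
    unfolding split by (subst sum.union_disjoint) (auto simp: gbinom_negj intro!: sum.neutral)
  also have "\<dots> = (\<Sum>t\<in>{0..N-q}. gbinom m (int (N-q) - int t) * gbinom b (int t))"
    using sum.shift_bounds_cl_nat_ivl[of "\<lambda>j. gbinom m (int N - int j) * gbinom b (int j - int q)" 0 q "N-q"] False
    by (simp add: of_nat_diff algebra_simps)
  also have "\<dots> = gbinom (b + m) (int (N-q))"
    by (subst gbinom_vdm[symmetric]) (simp add: mult.commute)
  finally show ?thesis using False by (simp add: of_nat_diff add.commute)
qed

lemma gbinom_altconv: "(\<Sum>j\<in>{0..N}. (-1)^j * gbinom m (int N - int j) * gbinom (int j + p) (int j - int q))
   = (-1)^q * gbinom (m - p - int q - 1) (int N - int q)"
proof -
  have t: "(-1)^j * gbinom m (int N - int j) * gbinom (int j + p) (int j - int q)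
     = (-1)^q * (gbinom m (int N - int j) * gbinom (- p - int q - 1) (int j - int q))" for j
  proof (cases "j < q")
    case True thus ?thesis by (simp add: gbinom_negj)
  next
    case False
    then obtain e where e: "j = q + e" using le_Suc_ex not_less by blast
    have "gbinom (int j + p) (int j - int q) = (-1)^e * gbinom (- p - int q - 1) (int j - int q)"
      by (subst gbinom_neg_upper) (simp add: e algebra_simps)
    moreover have "(-1::int)^j * (-1)^e = (-1)^q"
    proof -
      have "(-1::int)^e * (-1)^e = 1" by (simp flip: power_mult_distrib)
      thus ?thesis by (simp add: e power_add mult.assoc)
    qed
    ultimately show ?thesis
    proof -
      assume h1: "gbinom (int j + p) (int j - int q) = (-1)^e * gbinom (- p - int q - 1) (int j - int q)"
        and h2: "(-1::int)^j * (-1)^e = (-1)^q"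
      have "(-1)^j * gbinom m (int N - int j) * gbinom (int j + p) (int j - int q)
         = ((-1::int)^j * (-1)^e) * (gbinom m (int N - int j) * gbinom (- p - int q - 1) (int j - int q))"
        unfolding h1 by (simp only: mult_ac)
      thus ?thesis unfolding h2 .
    qed
  qed
  have "(\<Sum>j\<in>{0..N}. (-1)^j * gbinom m (int N - int j) * gbinom (int j + p) (int j - int q))
     = (\<Sum>j\<in>{0..N}. (-1)^q * (gbinom m (int N - int j) * gbinom (- p - int q - 1) (int j - int q)))"
    by (simp only: t)
  also have "\<dots> = (-1)^q * (\<Sum>j\<in>{0..N}. gbinom m (int N - int j) * gbinom (- p - int q - 1) (int j - int q))"
    by (rule sum_distrib_left[symmetric])
  also have "\<dots> = (-1)^q * gbinom (m + (- p - int q - 1)) (int N - int q)"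
    by (simp only: gbinom_conv)
  also have "m + (- p - int q - 1) = m - p - int q - 1" by simp
  finally show ?thesis .
qed



definition fc :: "nat \<Rightarrow> nat \<Rightarrow> nat \<Rightarrow> int" where
  "fc k m d = (if d \<le> m \<and> (m - d) mod k = 0 then int ((d + (m-d) div k) choose ((m-d) div k)) else 0)"

lemma genfib_small: "k \<ge> 1 \<Longrightarrow> m < k \<Longrightarrow> genfib k m = monom 1 m"
  by (subst genfib.simps) simp

lemma genfib_big: "k \<ge> 1 \<Longrightarrow> \<not> m < k \<Longrightarrow> genfib k m = pCons 0 (genfib k (m - 1)) + genfib k (m - k)"
  by (subst genfib.simps) simp

lemma fc_zero_case: assumes "k \<ge> 1" "\<not> m < k"
  shows "fc k (m - k) 0 = fc k m 0"
proof -
  have "m mod k = (m - k) mod k" using assms le_mod_geq by auto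
  moreover have "m div k = Suc ((m - k) div k)" using assms le_div_geq by auto
  ultimately show ?thesis unfolding fc_def by simp
qed

lemma fc_eq: assumes "k \<ge> 1" shows "fc k (d + k*s) d = int ((d+s) choose s)"
  using assms unfolding fc_def by simp

lemma fc_zero: assumes "\<not>(\<exists>s. m = d + k*s)" shows "fc k m d = 0"
proof (rule ccontr)
  assume "fc k m d \<noteq> 0"
  hence h: "d \<le> m" "(m - d) mod k = 0" unfolding fc_def by (auto split: if_splits)
  then obtain s where "m - d = k * s" by auto
  hence "m = d + k * s" using h(1) by simp
  thus False using assms by blast
qed

lemma fc_suc_case: assumes k: "k \<ge> 1" and mk: "\<not> m < k"
  shows "fc k (m - 1) d' + fc k (m - k) (Suc d') = fc k m (Suc d')"
proof (cases "\<exists>s. m = Suc d' + k*s")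
  case True
  then obtain s where ms: "m = Suc d' + k*s" by blast
  have 1: "fc k (m - 1) d' = int ((d' + s) choose s)"
    using fc_eq[OF k, of d' s] ms by simp
  have 3: "fc k m (Suc d') = int ((Suc d' + s) choose s)"
    using fc_eq[OF k, of "Suc d'" s] ms by simp
  show ?thesis
  proof (cases s)
    case 0
    have "fc k (m - k) (Suc d') = 0"
    proof (rule fc_zero, rule notI)
      assume "\<exists>t. m - k = Suc d' + k * t"
      then obtain t where "m - k = Suc d' + k * t" by blast
      thus False using ms 0 k mk by simp
    qed
    thus ?thesis using 1 3 0 by simp
  next
    case (Suc s')
    have "m - k = Suc d' + k * s'" using ms Suc by simp
    hence "fc k (m - k) (Suc d') = int ((Suc d' + s') choose s')"
      using fc_eq[OF k, of "Suc d'" s'] by simp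
    thus ?thesis using 1 3 Suc by simp
  qed
next
  case False
  have 1: "fc k (m - 1) d' = 0"
  proof (rule fc_zero, rule notI)
    assume "\<exists>t. m - 1 = d' + k * t"
    then obtain t where "m - 1 = d' + k * t" by blast
    hence "m = Suc d' + k * t" using k mk by simp
    thus False using False by blast
  qed
  have 2: "fc k (m - k) (Suc d') = 0"
  proof (rule fc_zero, rule notI)
    assume "\<exists>t. m - k = Suc d' + k * t"
    then obtain t where "m - k = Suc d' + k * t" by blast
    hence "m = Suc d' + k * Suc t" using k mk by simp
    thus False using False by blast
  qed
  show ?thesis using 1 2 fc_zero[OF False] by simp
qed

lemma coeff_genfib: "k \<ge> 1 \<Longrightarrow> coeff (genfib k m) d = fc k m d"
proof (induction m arbitrary: d rule: less_induct)
  case (less m)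
  show ?case
  proof (cases "m < k")
    case True
    have "fc k m d = (if m = d then 1 else 0)"
    proof (cases "m = d")
      case True
      thus ?thesis using fc_eq[OF less.prems, of d 0] by simp
    next
      case False
      have "\<not>(\<exists>s. m = d + k*s)"
      proof
        assume "\<exists>s. m = d + k*s"
        then obtain s where s: "m = d + k*s" by blast
        show False
        proof (cases s)
          case 0 thus False using s False by simp
        next
          case (Suc t) thus False using s \<open>m < k\<close> by simp
        qed
      qed
      thus ?thesis using fc_zero False by simp
    qed
    thus ?thesis using True less.prems by (simp add: genfib_small)
  next
    case False
    have IH1: "coeff (genfib k (m - 1)) d' = fc k (m - 1) d'" for d'
      using less.IH[of "m - 1" d'] less.prems False by simp
    have IH2: "coeff (genfib k (m - k)) d' = fc k (m - k) d'" for d'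
      using less.IH[of "m - k" d'] less.prems False by simp
    show ?thesis
    proof (cases d)
      case 0
      thus ?thesis unfolding genfib_big[OF less.prems False] coeff_add
        by (simp only: coeff_pCons_0 IH2 fc_zero_case[OF less.prems False] add_0)
    next
      case (Suc d')
      thus ?thesis unfolding genfib_big[OF less.prems False] coeff_add
        by (simp only: coeff_pCons_Suc IH1 IH2 fc_suc_case[OF less.prems False])
    qed
  qed
qed

lemma gbinom_nat: "gbinom (int N) (int M) = int (N choose M)"
proof -
  have "(of_int (gbinom (int N) (int M))::rat) = of_int (int (N choose M))"
    by (simp add: gbinom_rat binomial_gbinomial)
  thus ?thesis by (simp only: of_int_eq_iff)
qed

definition hh :: "nat \<Rightarrow> nat \<Rightarrow> nat \<Rightarrow> nat \<Rightarrow> int" where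
  "hh k r j q = gbinom (int j + (int r + (int k - 1) * int q)) (int j - int q)"

definition GG :: "nat \<Rightarrow> nat \<Rightarrow> nat \<Rightarrow> int poly" where
  "GG k r j = (\<Sum>q\<in>{0..j}. monom (hh k r j q) (k*q))"

lemma hh_big: "j < q \<Longrightarrow> hh k r j q = 0" by (simp add: hh_def gbinom_negj)

lemma coeff_GG: assumes k: "k \<ge> 1"
  shows "coeff (GG k r j) e = (if k dvd e then hh k r j (e div k) else 0)"
proof (cases "k dvd e")
  case True
  then obtain q0 where e: "e = k * q0" by auto
  have "coeff (GG k r j) e = (\<Sum>q\<in>{0..j}. if q = q0 then hh k r j q else 0)"
    unfolding GG_def coeff_sum e using k by (intro sum.cong) auto
  also have "\<dots> = (if q0 \<in> {0..j} then hh k r j q0 else 0)" by (simp add: sum.delta)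
  also have "\<dots> = hh k r j q0" using hh_big by auto
  finally show ?thesis using e k by simp
next
  case False
  have "coeff (GG k r j) e = 0"
    unfolding GG_def coeff_sum using False by (intro sum.neutral) auto
  thus ?thesis using False by simp
qed

lemma genfib_GG: assumes k: "k \<ge> 1" and r: "r < k"
  shows "genfib k (k * j + r) = monom 1 r * GG k r j"
proof (rule poly_eqI)
  fix d
  show "coeff (genfib k (k * j + r)) d = coeff (monom 1 r * GG k r j) d"
  proof (cases "d < r")
    case True
    have "\<not>(\<exists>s. k * j + r = d + k * s)"
    proof
      assume "\<exists>s. k * j + r = d + k * s"
      then obtain s where s: "k * j + r = d + k * s" by blast
      hence "k * s = k * j + (r - d)" using True by simp
      hence e: "k * (s - j) = r - d" by (simp add: diff_mult_distrib2)
      show False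
      proof (cases "s - j")
        case 0 thus False using e True by simp
      next
        case (Suc t)
        hence "k * (s - j) \<ge> k" by simp
        thus False using e r by simp
      qed
    qed
    hence "coeff (genfib k (k * j + r)) d = 0" unfolding coeff_genfib[OF k] by (rule fc_zero)
    thus ?thesis using True by (simp add: coeff_monom_mult)
  next
    case False
    define e where "e = d - r"
    have d: "d = e + r" using False e_def by simp
    have lhs: "coeff (monom 1 r * GG k r j) d = coeff (GG k r j) e"
      using d by (simp add: coeff_monom_mult)
    show ?thesis
    proof (cases "k dvd e")
      case True
      then obtain q where q: "e = k * q" by auto
      have rhs: "coeff (monom 1 r * GG k r j) d = hh k r j q"
        unfolding lhs coeff_GG[OF k] using q k by simp
      show ?thesis
      proof (cases "q \<le> j")
        case True
        have x: "k * j + r = d + k * (j - q)" using d q True by (simp add: diff_mult_distrib2)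
        have "coeff (genfib k (k * j + r)) d = int ((d + (j - q)) choose (j - q))"
          unfolding coeff_genfib[OF k] x by (rule fc_eq[OF k])
        moreover have "hh k r j q = int ((d + (j - q)) choose (j - q))"
        proof -
          have i1: "int (d + (j - q)) = int k * int q + int r + int j - int q"
            using d q True by (simp add: of_nat_diff)
          have h1: "int j + (int r + (int k - 1) * int q) = int (d + (j - q))"
            unfolding i1 by (simp add: left_diff_distrib)
          have h2: "int j - int q = int (j - q)" using True by simp
          show ?thesis unfolding hh_def h1 h2 by (rule gbinom_nat)
        qed
        ultimately show ?thesis using rhs by simp
      next
        case False
        have "\<not>(\<exists>s. k * j + r = d + k * s)"
        proof
          assume "\<exists>s. k * j + r = d + k * s"
          then obtain s where s: "k * j + r = d + k * s" by blast
          have "k * j < k * q" using False k by simp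
          thus False using s d q by linarith
        qed
        hence "coeff (genfib k (k * j + r)) d = 0" unfolding coeff_genfib[OF k] by (rule fc_zero)
        thus ?thesis using rhs False hh_big[of j q] by simp
      qed
    next
      case False
      have "\<not>(\<exists>s. k * j + r = d + k * s)"
      proof
        assume "\<exists>s. k * j + r = d + k * s"
        then obtain s where s: "k * j + r = d + k * s" by blast
        hence "e = k * j - k * s" using d by simp
        hence "e = k * (j - s)" by (simp add: diff_mult_distrib2)
        thus False using False by simp
      qed
      moreover have "coeff (GG k r j) e = 0" using False by (simp add: coeff_GG[OF k])
      ultimately show ?thesis using lhs fc_zero unfolding coeff_genfib[OF k] by simp
    qed
  qed
qed




definition bb :: "nat \<Rightarrow> nat \<Rightarrow> nat \<Rightarrow> nat \<Rightarrow> int poly" where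
  "bb k r i l = smult (of_int (gbinom (int i - int k + 1 + int r) (int i - int l))) (monom 1 k)
      + [: of_int (gbinom (int i + 1 + int r) (int i - int l + 1)) :]"

lemma coeff_bbw: "coeff (bb k r i l * smult ((-1)^l) (GG k r l)) d =
   (-1)^l * (gbinom (int i - int k + 1 + int r) (int i - int l) * (if d < k then 0 else coeff (GG k r l) (d - k))
     + gbinom (int i + 1 + int r) (int i - int l + 1) * coeff (GG k r l) d)"
  unfolding bb_def by (simp add: distrib_right coeff_monom_mult algebra_simps)

lemma gbinom_nat_zero: "N < M \<Longrightarrow> gbinom (int N) (int M) = 0"
  by (simp add: gbinom_nat)

lemma S2: "(\<Sum>l\<in>{0..i+1}. (-1)^l * (gbinom (int i + 1 + int r) (int i - int l + 1) * hh k r l q))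
   = (-1)^q * gbinom (int i - int k * int q) (int (i+1) - int q)"
proof -
  have "(\<Sum>l\<in>{0..i+1}. (-1)^l * (gbinom (int i + 1 + int r) (int i - int l + 1) * hh k r l q))
     = (\<Sum>l\<in>{0..i+1}. (-1)^l * gbinom (int i + 1 + int r) (int (i+1) - int l)
            * gbinom (int l + (int r + (int k - 1) * int q)) (int l - int q))"
    unfolding hh_def by (intro sum.cong refl) (simp add: algebra_simps)
  also have "\<dots> = (-1)^q * gbinom (int i + 1 + int r - (int r + (int k - 1) * int q) - int q - 1) (int (i+1) - int q)"
    by (rule gbinom_altconv)
  also have "int i + 1 + int r - (int r + (int k - 1) * int q) - int q - 1 = int i - int k * int q"
    by (simp add: left_diff_distrib)
  finally show ?thesis .
qed

lemma S1: assumes q: "q \<ge> 1"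
  shows "(\<Sum>l\<in>{0..i+1}. (-1)^l * (gbinom (int i - int k + 1 + int r) (int i - int l) * hh k r l (q - 1)))
   = - ((-1)^q * gbinom (int i - int k * int q) (int (i+1) - int q))"
proof -
  have "(\<Sum>l\<in>{0..i+1}. (-1)^l * (gbinom (int i - int k + 1 + int r) (int i - int l) * hh k r l (q - 1)))
     = (\<Sum>l\<in>{0..i}. (-1)^l * (gbinom (int i - int k + 1 + int r) (int i - int l) * hh k r l (q - 1)))"
    by (simp add: gbinom_negj)
  also have "\<dots> = (\<Sum>l\<in>{0..i}. (-1)^l * gbinom (int i - int k + 1 + int r) (int i - int l)
            * gbinom (int l + (int r + (int k - 1) * int (q - 1))) (int l - int (q - 1)))"
    unfolding hh_def by (intro sum.cong refl) (simp add: algebra_simps)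
  also have "\<dots> = (-1)^(q-1) * gbinom (int i - int k + 1 + int r - (int r + (int k - 1) * int (q - 1)) - int (q - 1) - 1) (int i - int (q - 1))"
    by (rule gbinom_altconv)
  also have "int i - int k + 1 + int r - (int r + (int k - 1) * int (q - 1)) - int (q - 1) - 1 = int i - int k * int q"
    using q by (simp add: of_nat_diff left_diff_distrib right_diff_distrib)
  also have "int i - int (q - 1) = int (i+1) - int q" using q by (simp add: of_nat_diff)
  also have "(-1::int)^(q-1) = - ((-1)^q)"
    using q by (cases q) auto
  finally show ?thesis by (simp only: minus_mult_left)
qed

lemma core: assumes k: "k \<ge> 1"
  shows "(\<Sum>l\<in>{0..i+1}. bb k r i l * smult ((-1)^l) (GG k r l)) = 0"
proof (rule poly_eqI)
  fix d
  let ?C1 = "\<lambda>l. gbinom (int i - int k + 1 + int r) (int i - int l)"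
  let ?C2 = "\<lambda>l. gbinom (int i + 1 + int r) (int i - int l + 1)"
  have "coeff (\<Sum>l\<in>{0..i+1}. bb k r i l * smult ((-1)^l) (GG k r l)) d
     = (\<Sum>l\<in>{0..i+1}. (-1)^l * (?C1 l * (if d < k then 0 else coeff (GG k r l) (d - k))
     + ?C2 l * coeff (GG k r l) d))"
    unfolding coeff_sum coeff_bbw ..
  also have "\<dots> = 0"
  proof (cases "k dvd d")
    case False
    have "\<not> k dvd (d - k)" if "\<not> d < k" using False that
      by (metis dvd_diff_nat dvd_refl le_add_diff_inverse2 not_less dvd_add)
    thus ?thesis using False by (auto simp: coeff_GG[OF k] intro!: sum.neutral)
  next
    case True
    then obtain q where d: "d = k * q" by auto
    show ?thesis
    proof (cases q)
      case 0
      have "(\<Sum>l\<in>{0..i+1}. (-1)^l * (?C1 l * (if d < k then 0 else coeff (GG k r l) (d - k))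
          + ?C2 l * coeff (GG k r l) d))
        = (\<Sum>l\<in>{0..i+1}. (-1)^l * (?C2 l * hh k r l q))"
        using d 0 k by (intro sum.cong refl) (simp add: coeff_GG[OF k])
      also have "\<dots> = 0" unfolding S2 using 0 gbinom_nat_zero[of i "i+1"] by simp
      finally show ?thesis .
    next
      case (Suc q')
      have dk: "\<not> d < k" "d - k = k * q'" using d Suc k by (auto simp: algebra_simps)
      have "(\<Sum>l\<in>{0..i+1}. (-1)^l * (?C1 l * (if d < k then 0 else coeff (GG k r l) (d - k))
          + ?C2 l * coeff (GG k r l) d))
        = (\<Sum>l\<in>{0..i+1}. (-1)^l * (?C1 l * hh k r l (q - 1)))
          + (\<Sum>l\<in>{0..i+1}. (-1)^l * (?C2 l * hh k r l q))"
        unfolding sum.distrib[symmetric] using d dk Suc k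
        by (intro sum.cong refl) (simp add: coeff_GG[OF k] algebra_simps)
      also have "\<dots> = 0"
      proof -
        have q1: "q \<ge> 1" using Suc by simp
        show ?thesis unfolding S2 S1[OF q1] by simp
      qed
      finally show ?thesis .
    qed
  qed
  finally show "coeff (\<Sum>l\<in>{0..i+1}. bb k r i l * smult ((-1)^l) (GG k r l)) d = coeff 0 d" by simp
qed




lemma bb_zero: "i + 1 < l \<Longrightarrow> bb k r i l = 0"
  unfolding bb_def by (simp add: gbinom_negj)

lemma gbinom_0: "gbinom m 0 = 1" by (simp add: gbinom_def)

lemma bb_sup: "bb k r i (Suc i) = 1"
  unfolding bb_def by (simp add: gbinom_negj gbinom_0 one_pCons)

lemma GG_0: "GG k r 0 = 1"
  unfolding GG_def hh_def by (simp add: gbinom_0 monom_0 one_pCons)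

lemma Bmat_index: "i < n \<Longrightarrow> l < n \<Longrightarrow> Bmat n k r $$ (i, l) = bb k r i l"
  unfolding Bmat_def bb_def by simp

lemma prod_list_map_one: "(\<And>x. x \<in> set xs \<Longrightarrow> f x = 1) \<Longrightarrow> prod_list (map f xs) = 1"
  by (induct xs) auto

theorem theorem2:
  fixes k r n :: nat
  assumes "k \<ge> 1" and "r < k" and "n \<ge> 1"
  shows "monom 1 r * det (Bmat n k r) = genfib k (k * n + r)"
proof -
  note k = assms(1)
  obtain m where n: "n = Suc m" using assms(3) by (cases n) auto
  define B where "B = Bmat n k r"
  define w where "w = (\<lambda>l. smult ((-1)^l) (GG k r l))"
  define U where "U = mat n n (\<lambda>(l,j). if j = 0 then w l else if l = j then 1 else (0::int poly))"
  define M where "M = B * U"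
  have B: "B \<in> carrier_mat n n" unfolding B_def Bmat_def by simp
  have Uc: "U \<in> carrier_mat n n" unfolding U_def by simp
  have Mc: "M \<in> carrier_mat n n" unfolding M_def using B Uc by simp
  have detU: "det U = 1"
  proof -
    have "det U = prod_list (diag_mat U)"
      by (rule det_lower_triangular[OF _ Uc]) (simp add: U_def)
    also have "\<dots> = 1" unfolding diag_mat_def
      by (rule prod_list_map_one) (auto simp: U_def w_def GG_0)
    finally show ?thesis .
  qed
  have detM: "det M = det B" unfolding M_def using det_mult[OF B Uc] detU by simp
  have Mi: "M $$ (i, j) = (\<Sum>l\<in>{0..<n}. bb k r i l * U $$ (l, j))" if "i < n" "j < n" for i j
    unfolding M_def using that B Uc
    by (simp add: scalar_prod_def B_def Bmat_index)
  have M0: "M $$ (i, 0) = (\<Sum>l\<in>{0..<n}. bb k r i l * w l)" if "i < n" for i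
    using Mi[OF that, of 0] n by (simp add: U_def)
  have MS: "M $$ (i, Suc j) = bb k r i (Suc j)" if "i < n" "Suc j < n" for i j
  proof -
    have "M $$ (i, Suc j) = (\<Sum>l\<in>{0..<n}. if l = Suc j then bb k r i l else 0)"
      unfolding Mi[OF that] using that by (intro sum.cong refl) (auto simp: U_def)
    also have "\<dots> = bb k r i (Suc j)" using that by simp
    finally show ?thesis .
  qed
  have Mlow: "M $$ (i, 0) = 0" if "i < m" for i
  proof -
    have "M $$ (i, 0) = (\<Sum>l\<in>{0..i+1}. bb k r i l * w l)"
    proof -
      have "{0..<n} = {0..i+1} \<union> {i+2..<n}" using that n by auto
      hence "(\<Sum>l\<in>{0..<n}. bb k r i l * w l) = (\<Sum>l\<in>{0..i+1}. bb k r i l * w l) + (\<Sum>l\<in>{i+2..<n}. bb k r i l * w l)"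
        by (simp only:) (rule sum.union_disjoint, auto)
      also have "(\<Sum>l\<in>{i+2..<n}. bb k r i l * w l) = 0" by (intro sum.neutral) (auto simp: bb_zero)
      finally show ?thesis using M0 that n by simp
    qed
    also have "\<dots> = 0" unfolding w_def by (rule core[OF k])
    finally show ?thesis .
  qed
  have Mtop: "M $$ (m, 0) = smult ((-1)^m) (GG k r n)"
  proof -
    have "(\<Sum>l\<in>{0..m+1}. bb k r m l * w l) = 0" unfolding w_def by (rule core[OF k])
    hence "(\<Sum>l\<in>{0..m}. bb k r m l * w l) + bb k r m (Suc m) * w (Suc m) = 0" by simp
    hence "(\<Sum>l\<in>{0..m}. bb k r m l * w l) = - w (Suc m)" by (simp add: bb_sup eq_neg_iff_add_eq_0)
    moreover have "{0..<n} = {0..m}" using n by auto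
    ultimately show ?thesis using M0[of m] n by (simp add: w_def)
  qed
  have detD: "det (mat_delete M m 0) = 1"
  proof -
    have D: "mat_delete M m 0 \<in> carrier_mat m m" using mat_delete_carrier[OF Mc] n by simp
    have Dij: "mat_delete M m 0 $$ (i, j) = bb k r i (Suc j)" if "i < m" "j < m" for i j
      using that Mc n by (simp add: mat_delete_def MS)
    have "det (mat_delete M m 0) = prod_list (diag_mat (mat_delete M m 0))"
      by (rule det_lower_triangular[OF _ D]) (simp add: Dij bb_zero)
    also have "\<dots> = 1" unfolding diag_mat_def
      by (rule prod_list_map_one) (use D in \<open>auto simp: Dij bb_sup\<close>)
    finally show ?thesis .
  qed
  have "det M = (\<Sum>i<n. M $$ (i, 0) * cofactor M i 0)"
    by (rule laplace_expansion_column[OF Mc]) (simp add: n)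
  also have "\<dots> = M $$ (m, 0) * cofactor M m 0"
    unfolding n by (simp add: Mlow)
  also have "\<dots> = GG k r n"
  proof -
    have e: "(-1::int poly)^m = smult ((-1)^m) 1" by (induct m) (auto simp: mult_smult_left)
    have c: "(-1::int)^m * (-1)^m = 1" by (simp flip: power_mult_distrib)
    show ?thesis unfolding Mtop cofactor_def detD
      by (simp add: e mult_smult_right c)
  qed
  finally have "det (Bmat n k r) = GG k r n" using detM B_def by simp
  thus ?thesis using genfib_GG[OF k assms(2), of n] by (simp add: mult.commute)
qed


end
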